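(* For $n\ge2$ and variables $x_1,\dots,x_{n-1}$, $t_1,\dots,t_{n-1}$, $z_1,\dots,z_n$, define $$P_n=\sum_{\sigma\in S_n}(-1)^{\ell(\sigma)}\prod_{m=1}^{n-1}\Big(\prod_{k=1}^{m}(1+t_mz_{\sigma(k)}x_m)\prod_{k=m+1}^{n}(1-z_{\sigma(k)}x_m)\Big).$$ Then $$P_n=x_1\cdots x_{n-1}\prod_{i=1}^{n-1}(1+t_i)\prod_{1\le i<j\le n-1}(x_i+t_jx_j)\prod_{1\le i<j\le n}(z_i-z_j).$$
   Context: $\ell(\sigma)$ denotes the length (number of inversions) of $\sigma\in S_n$. *)

theory Defs
  imports "HOL-Combinatorics.Permutations"
begin

definition perm_length :: "nat \<Rightarrow> (nat \<Rightarrow> nat) \<Rightarrow> nat" where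
  "perm_length n \<sigma> = card {(i, j). i \<in> {1..n} \<and> j \<in> {1..n} \<and> i < j \<and> \<sigma> j < \<sigma> i}"

end

theory Submission
  imports Defs "Jordan_Normal_Form.Determinant"
begin

lemma mult_mat_entry:
  assumes "A \<in> carrier_mat n m" "B \<in> carrier_mat m k" "i < n" "j < k"
  shows "(A * B) $$ (i,j) = (\<Sum>l<m. A $$ (i,l) * B $$ (l,j))"
  using assms by (auto simp: index_mult_mat scalar_prod_def atLeast0LessThan intro!: sum.cong)

lemma det_first_col:
  fixes A :: "'a::comm_ring_1 mat"
  assumes A: "A \<in> carrier_mat (Suc n) (Suc n)" and z: "\<And>i. 0 < i \<Longrightarrow> i < Suc n \<Longrightarrow> A $$ (i,0) = 0"
  shows "det A = A $$ (0,0) * det (mat_delete A 0 0)"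
proof -
  have "det A = (\<Sum>i<Suc n. A $$ (i,0) * cofactor A i 0)"
    by (rule laplace_expansion_column[OF A], simp)
  also have "\<dots> = A $$ (0,0) * cofactor A 0 0"
    by (subst sum.lessThan_Suc_shift) (simp add: z)
  finally show ?thesis by (simp add: cofactor_def)
qed

lemma det_diag:
  fixes c :: "nat \<Rightarrow> 'a::comm_ring_1"
  shows "det (mat n n (\<lambda>(i,j). if i = j then c i else 0)) = (\<Prod>i<n. c i)"
  by (subst det_upper_triangular[of _ n]) (auto simp: upper_triangular_def prod_list_diag_prod atLeast0LessThan)

lemma vandermonde:
  fixes w :: "nat \<Rightarrow> 'a::comm_ring_1"
  shows "det (mat s s (\<lambda>(i,j). w j ^ i)) = (\<Prod>j<s. \<Prod>i<j. w j - w i)"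
proof (induction s arbitrary: w)
  case 0
  then show ?case by (simp add: det_dim_zero)
next
  case (Suc s)
  define V where "V = mat (Suc s) (Suc s) (\<lambda>(i,j). w j ^ i)"
  define E :: "'a mat" where "E = mat (Suc s) (Suc s) (\<lambda>(i,j). (if i = j then 1 else 0) + (if i = Suc j then - w 0 else 0))"
  define w' where "w' = (\<lambda>j. w (Suc j))"
  have V: "V \<in> carrier_mat (Suc s) (Suc s)" and E: "E \<in> carrier_mat (Suc s) (Suc s)"
    by (auto simp: V_def E_def)
  have detE: "det E = 1"
    by (subst det_lower_triangular[of "Suc s"]) (auto simp: E_def prod_list_diag_prod)
  have EV: "E * V = mat (Suc s) (Suc s) (\<lambda>(i,j). if i = 0 then 1 else w j ^ (i - 1) * (w j - w 0))"
  proof (rule eq_matI)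
    fix i j assume ij: "i < dim_row (mat (Suc s) (Suc s) (\<lambda>(i,j). if i = 0 then 1 else w j ^ (i - 1) * (w j - w 0)))"
       "j < dim_col (mat (Suc s) (Suc s) (\<lambda>(i,j). if i = 0 then 1 else w j ^ (i - 1) * (w j - w 0)))"
    hence i: "i < Suc s" and j: "j < Suc s" by auto
    have "(E * V) $$ (i,j) = (\<Sum>l<Suc s. ((if i = l then 1 else 0) + (if i = Suc l then - w 0 else 0)) * w j ^ l)"
      by (subst mult_mat_entry[OF E V i j]) (auto simp: E_def V_def i j intro!: sum.cong)
    also have "\<dots> = (\<Sum>l<Suc s. (if i = l then w j ^ l else 0)) + (\<Sum>l<Suc s. (if i = Suc l then - w 0 * w j ^ l else 0))"
      by (subst sum.distrib[symmetric]) (auto intro!: sum.cong simp: distrib_right)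
    also have "\<dots> = (if i = 0 then 1 else w j ^ (i - 1) * (w j - w 0))"
    proof (cases i)
      case 0 then show ?thesis using i by (simp add: sum.delta)
    next
      case (Suc i') 
      have "(\<Sum>l<Suc s. (if i = Suc l then - w 0 * w j ^ l else 0)) = - w 0 * w j ^ i'"
        using i Suc by (simp add: sum.delta)
      then show ?thesis using i Suc by (cases "Suc i' = s") (auto simp: sum.delta algebra_simps)
    qed
    finally show "(E * V) $$ (i,j) = mat (Suc s) (Suc s) (\<lambda>(i,j). if i = 0 then 1 else w j ^ (i - 1) * (w j - w 0)) $$ (i,j)"
      using i j by simp
  qed (auto simp: E_def V_def)
  have "det V = det (E * V)" using det_mult[OF E V] detE by simp
  also have "\<dots> = det (mat_delete (E * V) 0 0)"
    by (subst det_first_col[of _ s]) (auto simp: EV)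
  also have "mat_delete (E * V) 0 0 = mat s s (\<lambda>(i,j). w' j ^ i) * mat s s (\<lambda>(i,j). if i = j then w' i - w 0 else 0)"
  proof (rule eq_matI)
    fix i j assume "i < dim_row (mat s s (\<lambda>(i,j). w' j ^ i) * mat s s (\<lambda>(i,j). if i = j then w' i - w 0 else 0))"
      "j < dim_col (mat s s (\<lambda>(i,j). w' j ^ i) * mat s s (\<lambda>(i,j). if i = j then w' i - w 0 else 0))"
    hence i: "i < s" and j: "j < s" by auto
    have "(mat s s (\<lambda>(i,j). w' j ^ i) * mat s s (\<lambda>(i,j). if i = j then w' i - w 0 else 0)) $$ (i,j)
       = (\<Sum>l<s. w' l ^ i * (if l = j then w' l - w 0 else 0))"
      by (subst mult_mat_entry[of _ s s _ s]) (auto simp: i j intro!: sum.cong)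
    also have "\<dots> = w' j ^ i * (w' j - w 0)"
      by (simp add: sum.delta' j if_distrib cong: if_cong)
    finally show "mat_delete (E * V) 0 0 $$ (i, j) = (mat s s (\<lambda>(i,j). w' j ^ i) * mat s s (\<lambda>(i,j). if i = j then w' i - w 0 else 0)) $$ (i, j)"
      using i j by (simp add: EV mat_delete_def w'_def)
  qed (auto simp: mat_delete_def EV)
  also have "det \<dots> = det (mat s s (\<lambda>(i,j). w' j ^ i)) * (\<Prod>i<s. w' i - w 0)"
    by (subst det_mult[of _ s]) (auto simp: det_diag)
  also have "\<dots> = (\<Prod>j<Suc s. \<Prod>i<j. w j - w i)"
  proof -
    have "(\<Prod>j<Suc s. \<Prod>i<j. w j - w i) = (\<Prod>j<s. \<Prod>i<Suc j. w (Suc j) - w i)"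
      by (subst prod.lessThan_Suc_shift) simp
    also have "\<dots> = (\<Prod>j<s. (w' j - w 0) * (\<Prod>i<j. w' j - w' i))"
      by (intro prod.cong refl, subst prod.lessThan_Suc_shift) (simp add: w'_def)
    finally show ?thesis unfolding Suc.IH by (simp add: prod.distrib mult.commute)
  qed
  finally show ?case by (simp add: V_def)
qed

definition inv0 :: "nat \<Rightarrow> (nat \<Rightarrow> nat) \<Rightarrow> nat" where
  "inv0 n p = card {(j,i). j < n \<and> i < j \<and> p j < p i}"

lemma pairs_prod:
  fixes w :: "nat \<Rightarrow> 'a::comm_ring_1"
  assumes p: "p permutes {0..<n}"
  shows "(\<Prod>(j,i)\<in>(SIGMA j:{..<n}. {..<j}). w (p j) - w (p i))
       = (-1) ^ inv0 n p * (\<Prod>(j,i)\<in>(SIGMA j:{..<n}. {..<j}). w j - w i)"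
proof -
  define P where "P = (SIGMA j:{..<n}. {..<j})"
  define I where "I = {(j,i). j < n \<and> i < j \<and> p j < p i}"
  define F where "F = (\<lambda>(j::nat,i::nat). w j - w i)"
  define \<phi> where "\<phi> = (\<lambda>(j,i). if p i < p j then (p j, p i) else (p i, p j))"
  have fin: "finite P" by (simp add: P_def)
  have injp: "inj p" using p by (rule permutes_inj)
  have pin: "\<And>i. i < n \<Longrightarrow> p i < n" using permutes_in_image[OF p] by auto
  have IP: "I \<subseteq> P" by (auto simp: I_def P_def)
  have key: "\<And>x. x \<in> P \<Longrightarrow> (case x of (j,i) \<Rightarrow> w (p j) - w (p i)) = (if x \<in> I then -1 else 1) * F (\<phi> x)"
  proof -
    fix x assume "x \<in> P"
    then obtain j i where x: "x = (j,i)" "j < n" "i < j" by (auto simp: P_def)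
    have "p j \<noteq> p i" using injp x by (auto simp: inj_eq)
    then show "?thesis x" using x by (auto simp: I_def F_def \<phi>_def)
  qed
  have inj: "inj_on \<phi> P"
  proof (rule inj_onI)
    fix x y assume "x \<in> P" "y \<in> P" "\<phi> x = \<phi> y"
    then show "x = y" using injp
      by (auto simp: P_def \<phi>_def inj_eq split: if_splits)
  qed
  have img: "\<phi> ` P \<subseteq> P"
  proof
    fix y assume "y \<in> \<phi> ` P"
    then obtain j i where "j < n" "i < j" "y = \<phi> (j,i)" by (auto simp: P_def)
    moreover have "p j \<noteq> p i" using injp \<open>i < j\<close> by (auto simp: inj_eq)
    ultimately show "y \<in> P" using pin by (auto simp: P_def \<phi>_def)
  qed
  have bij: "bij_betw \<phi> P P"
    using endo_inj_surj[OF fin img inj] inj by (simp add: bij_betw_def)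
  have "(\<Prod>x\<in>P. case x of (j,i) \<Rightarrow> w (p j) - w (p i)) = (\<Prod>x\<in>P. (if x \<in> I then -1 else 1) * F (\<phi> x))"
    by (rule prod.cong) (auto simp: key)
  also have "\<dots> = (\<Prod>x\<in>P. (if x \<in> I then -1 else 1)) * (\<Prod>x\<in>P. F (\<phi> x))"
    by (rule prod.distrib)
  also have "(\<Prod>x\<in>P. F (\<phi> x)) = (\<Prod>x\<in>P. F x)"
    by (rule prod.reindex_bij_betw[OF bij])
  also have "(\<Prod>x\<in>P. (if x \<in> I then -1 else (1::'a))) = (-1) ^ card I"
  proof -
    have "(\<Prod>x\<in>P. (if x \<in> I then -1 else (1::'a))) = (\<Prod>x\<in>P \<inter> I. -1)"
      by (subst prod.If_cases[OF fin]) (simp add: Int_def)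
    also have "P \<inter> I = I" using IP by auto
    finally show ?thesis by simp
  qed
  finally show ?thesis by (simp add: P_def I_def inv0_def F_def)
qed

lemma prod_nested_Sigma:
  "(\<Prod>j<(n::nat). \<Prod>i<j. f j i) = (\<Prod>(j,i)\<in>(SIGMA j:{..<n}. {..<j}). f j i)"
  by (rule prod.Sigma) auto

lemma sign_inv0:
  assumes p: "p permutes {0..<n}"
  shows "sign p = (-1::int) ^ inv0 n p"
proof -
  define w :: "nat \<Rightarrow> int" where "w = int"
  define A where "A = mat n n (\<lambda>(i,j). w i ^ j)"
  have A: "A \<in> carrier_mat n n" by (simp add: A_def)
  have pin: "\<And>i. i < n \<Longrightarrow> p i < n" using permutes_in_image[OF p] by auto
  have "det (mat n n (\<lambda>(i,j). A $$ (p i, j))) = of_int (sign p) * det A"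
    by (rule det_permute_rows[OF A p])
  also have "mat n n (\<lambda>(i,j). A $$ (p i, j)) = transpose_mat (mat n n (\<lambda>(i,j). w (p j) ^ i))"
    by (rule eq_matI) (auto simp: A_def pin)
  also have "A = transpose_mat (mat n n (\<lambda>(i,j). w j ^ i))"
    by (rule eq_matI) (auto simp: A_def)
  finally have "det (mat n n (\<lambda>(i,j). w (p j) ^ i)) = sign p * det (mat n n (\<lambda>(i,j). w j ^ i))"
    by (simp add: det_transpose[of _ n])
  hence "(\<Prod>(j,i)\<in>(SIGMA j:{..<n}. {..<j}). w (p j) - w (p i)) = sign p * (\<Prod>(j,i)\<in>(SIGMA j:{..<n}. {..<j}). w j - w i)"
    by (simp add: vandermonde prod_nested_Sigma)
  hence "(-1) ^ inv0 n p * (\<Prod>(j,i)\<in>(SIGMA j:{..<n}. {..<j}). w j - w i) = sign p * (\<Prod>(j,i)\<in>(SIGMA j:{..<n}. {..<j}). w j - w i)"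
    by (simp add: pairs_prod[OF p])
  moreover have "(\<Prod>(j,i)\<in>(SIGMA j:{..<n}. {..<j}). w j - w i) \<noteq> 0"
    by (subst prod_zero_iff) (auto simp: w_def)
  ultimately show ?thesis by simp
qed

lemma det_last_col:
  fixes A :: "'a::comm_ring_1 mat"
  assumes A: "A \<in> carrier_mat (Suc n) (Suc n)" and z: "\<And>i. i < n \<Longrightarrow> A $$ (i,n) = 0"
  shows "det A = A $$ (n,n) * det (mat_delete A n n)"
proof -
  have "det A = (\<Sum>i<Suc n. A $$ (i,n) * cofactor A i n)"
    by (rule laplace_expansion_column[OF A], simp)
  also have "\<dots> = A $$ (n,n) * cofactor A n n"
    by (subst sum.lessThan_Suc) (simp add: z)
  finally show ?thesis by (simp add: cofactor_def)
qed

definition Tm :: "'a::comm_ring_1 \<Rightarrow> 'a \<Rightarrow> (nat \<Rightarrow> 'a) \<Rightarrow> nat \<Rightarrow> 'a mat" where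
  "Tm a b h s = mat s s (\<lambda>(i,j). if i = s - 1 then h j else (if j = i then a else 0) + (if j = Suc i then b else 0))"

lemma det_Tm: "det (Tm a b h (Suc s)) = (\<Sum>i<Suc s. h i * a ^ i * (-b) ^ (s - i))"
proof (induction s arbitrary: h)
  case 0
  show ?case by (subst det_single) (auto simp: Tm_def)
next
  case (Suc s)
  define T where "T = Tm a b h (Suc (Suc s))"
  have T: "T \<in> carrier_mat (Suc (Suc s)) (Suc (Suc s))" by (simp add: T_def Tm_def)
  have "det T = (\<Sum>i<Suc (Suc s). T $$ (i,0) * cofactor T i 0)"
    by (rule laplace_expansion_column[OF T], simp)
  also have "\<dots> = T $$ (Suc s, 0) * cofactor T (Suc s) 0 + T $$ (0,0) * cofactor T 0 0"
    by (subst sum.lessThan_Suc, subst sum.lessThan_Suc_shift) (simp add: T_def Tm_def)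
  moreover have d0: "mat_delete T 0 0 = Tm a b (\<lambda>j. h (Suc j)) (Suc s)"
    by (rule eq_matI) (auto simp: T_def Tm_def mat_delete_def)
  moreover have d1: "det (mat_delete T (Suc s) 0) = b ^ Suc s"
  proof -
    have "det (mat_delete T (Suc s) 0) = prod_list (diag_mat (mat_delete T (Suc s) 0))"
      by (rule det_lower_triangular[of "Suc s"]) (auto simp: T_def Tm_def mat_delete_def)
    also have "\<dots> = b ^ Suc s"
      by (simp add: prod_list_diag_prod T_def Tm_def mat_delete_def)
    finally show ?thesis .
  qed
  ultimately have "det T = h 0 * ((-1) ^ Suc s * b ^ Suc s) + a * (\<Sum>i<Suc s. h (Suc i) * a ^ i * (-b) ^ (s - i))"
    using Suc.IH[of "\<lambda>j. h (Suc j)"] by (simp add: cofactor_def T_def Tm_def)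
  also have "\<dots> = (\<Sum>i<Suc (Suc s). h i * a ^ i * (-b) ^ (Suc s - i))"
    by (subst (2) sum.lessThan_Suc_shift)
       (simp add: sum_distrib_left algebra_simps power_minus_mult power_mult_distrib[symmetric])
  finally show ?case by (simp add: T_def)
qed

lemma coeff_lin_mult:
  "coeff ([:c, d:] * p) i = c * coeff p i + (if i = 0 then 0 else d * coeff p (i - 1))"
  by (cases i) (simp_all add: mult_pCons_left coeff_pCons)

definition hev :: "'a::comm_ring_1 \<Rightarrow> 'a \<Rightarrow> 'a poly \<Rightarrow> nat \<Rightarrow> 'a" where
  "hev a b p e = (\<Sum>i<Suc e. coeff p i * a ^ i * (-b) ^ (e - i))"

lemma hev_lin:
  assumes "degree p \<le> e"
  shows "hev a b ([:c, d:] * p) (Suc e) = (d * a - c * b) * hev a b p e"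
proof -
  have z: "coeff p (Suc e) = 0" using assms by (simp add: coeff_eq_0)
  have "hev a b ([:c, d:] * p) (Suc e)
     = (\<Sum>i<Suc (Suc e). c * coeff p i * a ^ i * (-b) ^ (Suc e - i))
     + (\<Sum>i<Suc (Suc e). (if i = 0 then 0 else d * coeff p (i - 1)) * a ^ i * (-b) ^ (Suc e - i))"
    unfolding hev_def coeff_lin_mult by (simp add: sum.distrib[symmetric] algebra_simps)
  also have "(\<Sum>i<Suc (Suc e). c * coeff p i * a ^ i * (-b) ^ (Suc e - i))
      = (\<Sum>i<Suc e. c * coeff p i * a ^ i * (-b) ^ (Suc e - i))"
    by (subst sum.lessThan_Suc) (simp add: z)
  also have "\<dots> = (- c * b) * hev a b p e"
    unfolding hev_def sum_distrib_left
    by (intro sum.cong refl) (simp add: Suc_diff_le algebra_simps)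
  also have "(\<Sum>i<Suc (Suc e). (if i = 0 then 0 else d * coeff p (i - 1)) * a ^ i * (-b) ^ (Suc e - i))
      = (d * a) * hev a b p e"
    unfolding hev_def sum_distrib_left
    by (subst sum.lessThan_Suc_shift) (simp add: algebra_simps)
  finally show ?thesis by (simp add: algebra_simps)
qed

lemma degree_lin_prod: "degree (\<Prod>m<K. [:c m, d m:]) \<le> K"
proof (induction K)
  case 0 then show ?case by simp
next
  case (Suc K)
  have "degree ((\<Prod>m<K. [:c m, d m:]) * [:c K, d K:]) \<le> degree (\<Prod>m<K. [:c m, d m:]) + degree [:c K, d K:]"
    by (rule degree_mult_le)
  also have "\<dots> \<le> Suc K" using Suc.IH by simp
  finally show ?case by simp
qed

lemma hev_prod: "hev a b (\<Prod>m<K. [:c m, d m:]) K = (\<Prod>m<K. d m * a - c m * b)"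
proof (induction K)
  case 0 then show ?case by (simp add: hev_def)
next
  case (Suc K)
  have "hev a b (\<Prod>m<Suc K. [:c m, d m:]) (Suc K) = hev a b ([:c K, d K:] * (\<Prod>m<K. [:c m, d m:])) (Suc K)"
    by (simp add: mult.commute)
  also have "\<dots> = (d K * a - c K * b) * hev a b (\<Prod>m<K. [:c m, d m:]) K"
    by (rule hev_lin[OF degree_lin_prod])
  finally show ?case using Suc.IH by (simp add: mult.commute)
qed

definition Gp :: "(nat \<Rightarrow> 'a::comm_ring_1) \<Rightarrow> (nat \<Rightarrow> 'a) \<Rightarrow> (nat \<Rightarrow> 'a) \<Rightarrow> (nat \<Rightarrow> 'a) \<Rightarrow> nat \<Rightarrow> nat \<Rightarrow> 'a poly" where
  "Gp a b c d K k = (\<Prod>m<K. if k \<le> m then [:a m, b m:] else [:c m, d m:])"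

lemma Gp_Suc: "Gp a b c d (Suc K) k = (if k \<le> K then [:a K, b K:] else [:c K, d K:]) * Gp a b c d K k"
  by (simp add: Gp_def mult.commute)

lemma degree_Gp: "degree (Gp a b c d K k) \<le> K"
proof (induction K)
  case 0 then show ?case by (simp add: Gp_def)
next
  case (Suc K)
  have "degree (Gp a b c d (Suc K) k) \<le> degree (if k \<le> K then [:a K, b K:] else [:c K, d K:]) + degree (Gp a b c d K k)"
    unfolding Gp_Suc by (rule degree_mult_le)
  also have "\<dots> \<le> Suc K" using Suc.IH by simp
  finally show ?case .
qed

lemma Gp_last: "Gp a b c d K K = (\<Prod>m<K. [:c m, d m:])"
  by (simp add: Gp_def)

definition Cm where "Cm a b c d K = mat (Suc K) (Suc K) (\<lambda>(k,i). coeff (Gp a b c d K k) i)"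

lemma det_Cm: "det (Cm a b c d K) = (\<Prod>j<K. \<Prod>i<Suc j. a j * d i - b j * c i)"
proof (induction K)
  case 0
  show ?case by (subst det_single) (auto simp: Cm_def Gp_def)
next
  case (Suc K)
  define h where "h = coeff (Gp a b c d (Suc K) (Suc K))"
  define B where "B = mat (Suc (Suc K)) (Suc (Suc K)) (\<lambda>(k,i). if k < Suc K \<and> i < Suc K then coeff (Gp a b c d K k) i else if k = Suc K \<and> i = Suc K then 1 else 0)"
  define T where "T = Tm (a K) (b K) h (Suc (Suc K))"
  have B: "B \<in> carrier_mat (Suc (Suc K)) (Suc (Suc K))" by (simp add: B_def)
  have T: "T \<in> carrier_mat (Suc (Suc K)) (Suc (Suc K))" by (simp add: T_def Tm_def)
  have detB: "det B = det (Cm a b c d K)"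
    by (subst det_last_col[OF B]) (auto simp: B_def Cm_def mat_delete_def intro!: arg_cong[of _ _ det] eq_matI)
  have detT: "det T = (\<Prod>m<Suc K. d m * a K - c m * b K)"
  proof -
    have "det T = hev (a K) (b K) (Gp a b c d (Suc K) (Suc K)) (Suc K)"
      unfolding T_def det_Tm hev_def h_def by simp
    also have "\<dots> = (\<Prod>m<Suc K. d m * a K - c m * b K)"
      unfolding Gp_last by (rule hev_prod)
    finally show ?thesis .
  qed
  have CBT: "Cm a b c d (Suc K) = B * T"
  proof (rule eq_matI)
    fix k j assume "k < dim_row (B * T)" "j < dim_col (B * T)"
    hence k: "k < Suc (Suc K)" and j: "j < Suc (Suc K)" using B T by auto
    have BT: "(B * T) $$ (k,j) = (\<Sum>l<Suc (Suc K). B $$ (k,l) * T $$ (l,j))"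
      by (rule mult_mat_entry[OF B T k j])
    show "Cm a b c d (Suc K) $$ (k, j) = (B * T) $$ (k, j)"
    proof (cases "k = Suc K")
      case True
      have "(B * T) $$ (k,j) = T $$ (Suc K, j)"
        unfolding BT using True j by (simp add: B_def sum.lessThan_Suc)
      then show ?thesis using True j by (simp add: Cm_def T_def Tm_def h_def)
    next
      case False
      hence kK: "k \<le> K" using k by simp
      define G where "G = Gp a b c d K k"
      have z: "coeff G (Suc K) = 0" using degree_Gp[of a b c d K k] by (simp add: G_def coeff_eq_0)
      have "(B * T) $$ (k,j) = (\<Sum>l<Suc K. coeff G l * ((if j = l then a K else 0) + (if j = Suc l then b K else 0)))"
        unfolding BT using kK j by (subst sum.lessThan_Suc) (auto simp: B_def T_def Tm_def G_def intro!: sum.cong)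
      also have "\<dots> = (\<Sum>l<Suc K. (if j = l then coeff G j * a K else 0)) + (\<Sum>l<Suc K. (if j = Suc l then coeff G (j - 1) * b K else 0))"
        by (subst sum.distrib[symmetric]) (auto intro!: sum.cong simp: distrib_left)
      also have "\<dots> = a K * coeff G j + (if j = 0 then 0 else b K * coeff G (j - 1))"
        using j z by (cases j) (auto simp: sum.delta' mult.commute less_Suc_eq)
      also have "\<dots> = coeff (Gp a b c d (Suc K) k) j"
        by (simp only: Gp_Suc if_P[OF kK] coeff_lin_mult G_def)
      finally show ?thesis using k j by (simp add: Cm_def)
    qed
  qed (auto simp: Cm_def B_def T_def Tm_def)
  have "det (Cm a b c d (Suc K)) = det B * det T"
    unfolding CBT by (rule det_mult[OF B T])
  also have "\<dots> = (\<Prod>j<Suc K. \<Prod>i<Suc j. a j * d i - b j * c i)"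
    unfolding detB detT Suc.IH by (simp add: algebra_simps)
  finally show ?case .
qed

lemma poly_sum_bound:
  fixes p :: "'a::comm_ring_1 poly"
  assumes "degree p \<le> K"
  shows "poly p x = (\<Sum>i<Suc K. coeff p i * x ^ i)"
proof -
  have "poly p x = (\<Sum>i\<le>degree p. coeff p i * x ^ i)" by (rule poly_altdef)
  also have "\<dots> = (\<Sum>i<Suc K. coeff p i * x ^ i)"
    using assms by (intro sum.mono_neutral_left) (auto simp: coeff_eq_0)
  finally show ?thesis .
qed

lemma det_G:
  "det (mat (Suc K) (Suc K) (\<lambda>(k,j). poly (Gp a b c d K k) (w j)))
   = (\<Prod>j<K. \<Prod>i<Suc j. a j * d i - b j * c i) * (\<Prod>j<Suc K. \<Prod>i<j. w j - w i)"
proof -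
  have C: "Cm a b c d K \<in> carrier_mat (Suc K) (Suc K)" by (simp add: Cm_def)
  have V: "mat (Suc K) (Suc K) (\<lambda>(i,j). w j ^ i) \<in> carrier_mat (Suc K) (Suc K)" by simp
  have "mat (Suc K) (Suc K) (\<lambda>(k,j). poly (Gp a b c d K k) (w j)) = Cm a b c d K * mat (Suc K) (Suc K) (\<lambda>(i,j). w j ^ i)"
  proof (rule eq_matI)
    fix k j assume "k < dim_row (Cm a b c d K * mat (Suc K) (Suc K) (\<lambda>(i,j). w j ^ i))"
      "j < dim_col (Cm a b c d K * mat (Suc K) (Suc K) (\<lambda>(i,j). w j ^ i))"
    hence k: "k < Suc K" and j: "j < Suc K" using C by auto
    show "mat (Suc K) (Suc K) (\<lambda>(k,j). poly (Gp a b c d K k) (w j)) $$ (k,j) = (Cm a b c d K * mat (Suc K) (Suc K) (\<lambda>(i,j). w j ^ i)) $$ (k,j)"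
      by (subst mult_mat_entry[OF C V k j]) (simp add: k j Cm_def poly_sum_bound[OF degree_Gp])
  qed (auto simp: Cm_def)
  also have "det \<dots> = det (Cm a b c d K) * det (mat (Suc K) (Suc K) (\<lambda>(i,j). w j ^ i))"
    by (rule det_mult[OF C V])
  finally show ?thesis by (simp add: det_Cm vandermonde)
qed

definition toS :: "nat \<Rightarrow> (nat \<Rightarrow> nat) \<Rightarrow> nat \<Rightarrow> nat" where
  "toS n p = (\<lambda>i. if 1 \<le> i \<and> i \<le> n then Suc (p (i - 1)) else i)"

definition frS :: "nat \<Rightarrow> (nat \<Rightarrow> nat) \<Rightarrow> nat \<Rightarrow> nat" where
  "frS n s = (\<lambda>i. if i < n then s (Suc i) - 1 else i)"

lemma bij_pred: "bij_betw (\<lambda>i. i - 1) {1..(n::nat)} {0..<n}"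
  by (rule bij_betw_byWitness[where f'=Suc]) auto

lemma bij_Suc: "bij_betw Suc {0..<(n::nat)} {1..n}"
  by (rule bij_betw_byWitness[where f'="\<lambda>i. i - 1"]) auto

lemma toS_permutes:
  assumes p: "p permutes {0..<n}"
  shows "toS n p permutes {1..n}"
proof (rule bij_imp_permutes)
  have "bij_betw (Suc \<circ> (p \<circ> (\<lambda>i. i - 1))) {1..n} {1..n}"
    by (rule bij_betw_trans[OF bij_betw_trans[OF bij_pred permutes_imp_bij[OF p]] bij_Suc])
  thus "bij_betw (toS n p) {1..n} {1..n}"
    by (rule bij_betw_cong[THEN iffD1, rotated]) (auto simp: toS_def)
qed (auto simp: toS_def)

lemma frS_permutes:
  assumes s: "s permutes {1..n}"
  shows "frS n s permutes {0..<n}"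
proof (rule bij_imp_permutes)
  have "bij_betw ((\<lambda>i. i - 1) \<circ> (s \<circ> Suc)) {0..<n} {0..<n}"
    by (rule bij_betw_trans[OF bij_betw_trans[OF bij_Suc permutes_imp_bij[OF s]] bij_pred])
  thus "bij_betw (frS n s) {0..<n} {0..<n}"
    by (rule bij_betw_cong[THEN iffD1, rotated]) (auto simp: frS_def)
qed (auto simp: frS_def)

lemma bij_toS: "bij_betw (toS n) {p. p permutes {0..<n}} {s. s permutes {1..n}}"
proof (rule bij_betw_byWitness[where f'="frS n"])
  show "\<forall>p\<in>{p. p permutes {0..<n}}. frS n (toS n p) = p"
  proof
    fix p assume "p \<in> {p. p permutes {0..<n}}"
    hence p: "p permutes {0..<n}" by simp
    show "frS n (toS n p) = p"
      using permutes_not_in[OF p] by (auto simp: frS_def toS_def fun_eq_iff)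
  qed
  show "\<forall>s\<in>{s. s permutes {1..n}}. toS n (frS n s) = s"
  proof
    fix s assume "s \<in> {s. s permutes {1..n}}"
    hence s: "s permutes {1..n}" by simp
    have "\<And>i. 1 \<le> i \<Longrightarrow> i \<le> n \<Longrightarrow> 1 \<le> s i" using permutes_in_image[OF s] by auto
    hence "\<And>i. 1 \<le> i \<Longrightarrow> i \<le> n \<Longrightarrow> Suc (s i - 1) = s i" by fastforce
    then show "toS n (frS n s) = s"
      using permutes_not_in[OF s] by (auto simp: frS_def toS_def fun_eq_iff)
  qed
qed (insert toS_permutes[of _ n] frS_permutes[of _ n], auto)

lemma perm_length_toS:
  assumes p: "p permutes {0..<n}"
  shows "perm_length n (toS n p) = inv0 n p"
proof -
  have "{(i, j). i \<in> {1..n} \<and> j \<in> {1..n} \<and> i < j \<and> toS n p j < toS n p i}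
     = (\<lambda>(j,i). (Suc i, Suc j)) ` {(j,i). j < n \<and> i < j \<and> p j < p i}"
  proof (intro equalityI subsetI)
    fix y assume "y \<in> {(i, j). i \<in> {1..n} \<and> j \<in> {1..n} \<and> i < j \<and> toS n p j < toS n p i}"
    then obtain i j where y: "y = (i,j)" "1 \<le> i" "i \<le> n" "1 \<le> j" "j \<le> n" "i < j" "p (j - 1) < p (i - 1)"
      by (auto simp: toS_def)
    show "y \<in> (\<lambda>(j,i). (Suc i, Suc j)) ` {(j,i). j < n \<and> i < j \<and> p j < p i}"
      by (rule image_eqI[where x="(j - 1, i - 1)"]) (use y in auto)
  qed (auto simp: toS_def)
  moreover have "inj_on (\<lambda>(j::nat,i::nat). (Suc i, Suc j)) {(j,i). j < n \<and> i < j \<and> p j < p i}"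
    by (auto simp: inj_on_def)
  ultimately show ?thesis unfolding perm_length_def inv0_def by (simp add: card_image)
qed

lemma sign_cancel:
  fixes f g :: "nat \<Rightarrow> nat \<Rightarrow> 'a::comm_ring_1"
  shows "(\<Prod>j<K. \<Prod>i<Suc j. - f j i) * (\<Prod>j<Suc K. \<Prod>i<j. - g j i)
       = (\<Prod>j<K. \<Prod>i<Suc j. f j i) * (\<Prod>j<Suc K. \<Prod>i<j. g j i)"
proof -
  have 1: "(\<Prod>j<K. \<Prod>i<Suc j. - f j i) = (\<Prod>j<K. (-1::'a) ^ Suc j) * (\<Prod>j<K. \<Prod>i<Suc j. f j i)"
    by (simp add: prod_uminus prod.distrib)
  have 2: "(\<Prod>j<Suc K. \<Prod>i<j. - g j i) = (\<Prod>j<Suc K. (-1::'a) ^ j) * (\<Prod>j<Suc K. \<Prod>i<j. g j i)"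
    by (simp add: prod_uminus prod.distrib)
  have 3: "(\<Prod>j<Suc K. (-1::'a) ^ j) = (\<Prod>j<K. (-1::'a) ^ Suc j)"
    by (subst prod.lessThan_Suc_shift) simp
  have 4: "(\<Prod>j<K. (-1::'a) ^ Suc j) * (\<Prod>j<K. (-1::'a) ^ Suc j) = 1"
    by (simp add: prod.distrib[symmetric] power_add[symmetric] flip: mult_2)
  show ?thesis unfolding 1 2 3
    by (metis (no_types, lifting) 4 mult.assoc mult.left_commute mult_1)
qed

lemma split_if_prod:
  fixes A B :: "nat \<Rightarrow> 'a::comm_monoid_mult"
  assumes "m \<le> n"
  shows "(\<Prod>k = 1..m. A k) * (\<Prod>k = m+1..n. B k) = (\<Prod>k = 1..n. if k \<le> m then A k else B k)"
proof -
  have "(\<Prod>k = 1..n. if k \<le> m then A k else B k) = prod A ({1..n} \<inter> {k. k \<le> m}) * prod B ({1..n} \<inter> - {k. k \<le> m})"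
    by (rule prod.If_cases) simp
  also have "{1..n} \<inter> {k. k \<le> m} = {1..m}" using assms by auto
  also have "{1..n} \<inter> - {k. k \<le> m} = {m+1..n}" by auto
  finally show ?thesis by simp
qed

theorem mainTheorem8:
  fixes n :: nat and x t z :: "nat \<Rightarrow> 'a :: comm_ring_1"
  assumes "n \<ge> 2"
  shows "(\<Sum>\<sigma> | \<sigma> permutes {1..n}.
            (-1) ^ perm_length n \<sigma> *
            (\<Prod>m = 1..n-1. (\<Prod>k = 1..m. 1 + t m * z (\<sigma> k) * x m) *
                             (\<Prod>k = m+1..n. 1 - z (\<sigma> k) * x m)))
       = (\<Prod>i = 1..n-1. x i) * (\<Prod>i = 1..n-1. 1 + t i)
         * (\<Prod>j = 1..n-1. \<Prod>i = 1..<j. x i + t j * x j)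
         * (\<Prod>j = 1..n. \<Prod>i = 1..<j. z i - z j)"
proof -
  define K where "K = n - 1"
  have nK: "n = Suc K" using assms by (simp add: K_def)
  define a :: "nat \<Rightarrow> 'a" where "a = (\<lambda>m. 1)"
  define b where "b = (\<lambda>m. t (Suc m) * x (Suc m))"
  define c :: "nat \<Rightarrow> 'a" where "c = (\<lambda>m. 1)"
  define d where "d = (\<lambda>m. - x (Suc m))"
  define w where "w = (\<lambda>j. z (Suc j))"
  define F where "F = (\<lambda>\<sigma>. \<Prod>m = 1..n-1. (\<Prod>k = 1..m. 1 + t m * z (\<sigma> k) * x m) *
                             (\<Prod>k = m+1..n. 1 - z (\<sigma> k) * x m))"
  define M where "M = mat n n (\<lambda>(k,j). poly (Gp a b c d K k) (w j))"
  have FA: "F (toS n p) = (\<Prod>k = 0..<n. M $$ (k, p k))" if p: "p permutes {0..<n}" for p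
  proof -
    have pin: "\<And>i. i < n \<Longrightarrow> p i < n" using permutes_in_image[OF p] by auto
    let ?H = "\<lambda>m k. if k \<le> m then 1 + t m * z (toS n p k) * x m else 1 - z (toS n p k) * x m"
    have "F (toS n p) = (\<Prod>m = 1..n-1. \<Prod>k = 1..n. ?H m k)"
      unfolding F_def by (intro prod.cong refl split_if_prod) auto
    also have "\<dots> = (\<Prod>k = 1..n. \<Prod>m = 1..n-1. ?H m k)"
      by (rule prod.swap)
    also have "\<dots> = (\<Prod>k<n. \<Prod>m<K. ?H (Suc m) (Suc k))"
      unfolding K_def by (simp add: prod.atLeast1_atMost_eq)
    also have "\<dots> = (\<Prod>k<n. poly (Gp a b c d K k) (w (p k)))"
    proof (intro prod.cong refl)
      fix k assume "k \<in> {..<n}"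
      hence k: "k < n" by simp
      show "(\<Prod>m<K. ?H (Suc m) (Suc k)) = poly (Gp a b c d K k) (w (p k))"
        unfolding Gp_def poly_prod
        by (intro prod.cong refl) (use k in \<open>auto simp: toS_def a_def b_def c_def d_def w_def algebra_simps\<close>)
    qed
    also have "\<dots> = (\<Prod>k = 0..<n. M $$ (k, p k))"
      by (auto simp: M_def pin atLeast0LessThan intro!: prod.cong)
    finally show ?thesis .
  qed
  have "(\<Sum>\<sigma> | \<sigma> permutes {1..n}. (-1) ^ perm_length n \<sigma> * F \<sigma>)
      = (\<Sum>p | p permutes {0..<n}. (-1) ^ perm_length n (toS n p) * F (toS n p))"
    by (rule sum.reindex_bij_betw[OF bij_toS, symmetric])
  also have "\<dots> = (\<Sum>p | p permutes {0..<n}. of_int (sign p) * (\<Prod>k = 0..<n. M $$ (k, p k)))"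
    by (intro sum.cong refl) (simp add: FA perm_length_toS sign_inv0)
  also have "\<dots> = det M"
    by (rule det_def'[symmetric]) (simp add: M_def)
  also have "\<dots> = (\<Prod>j<K. \<Prod>i<Suc j. a j * d i - b j * c i) * (\<Prod>j<Suc K. \<Prod>i<j. w j - w i)"
    unfolding M_def nK by (rule det_G)
  also have "\<dots> = (\<Prod>j<K. \<Prod>i<Suc j. - (x (Suc i) + t (Suc j) * x (Suc j))) * (\<Prod>j<Suc K. \<Prod>i<j. - (z (Suc i) - z (Suc j)))"
    by (simp add: a_def b_def c_def d_def w_def algebra_simps)
  also have "\<dots> = (\<Prod>j<K. \<Prod>i<Suc j. x (Suc i) + t (Suc j) * x (Suc j)) * (\<Prod>j<Suc K. \<Prod>i<j. z (Suc i) - z (Suc j))"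
    by (rule sign_cancel)
  also have "(\<Prod>j<K. \<Prod>i<Suc j. x (Suc i) + t (Suc j) * x (Suc j))
      = (\<Prod>j<K. x (Suc j)) * (\<Prod>j<K. 1 + t (Suc j)) * (\<Prod>j<K. \<Prod>i<j. x (Suc i) + t (Suc j) * x (Suc j))"
    by (simp add: prod.distrib[symmetric] algebra_simps)
  also have "\<dots> = (\<Prod>i = 1..n-1. x i) * (\<Prod>i = 1..n-1. 1 + t i) * (\<Prod>j = 1..n-1. \<Prod>i = 1..<j. x i + t j * x j)"
    unfolding K_def
    by (simp add: prod.atLeast1_atMost_eq prod.shift_bounds_Suc_ivl atLeast0LessThan del: prod.op_ivl_Suc)
  also have "(\<Prod>j<Suc K. \<Prod>i<j. z (Suc i) - z (Suc j)) = (\<Prod>j = 1..n. \<Prod>i = 1..<j. z i - z j)"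
    unfolding nK
    by (simp add: prod.atLeast1_atMost_eq prod.shift_bounds_Suc_ivl atLeast0LessThan del: prod.op_ivl_Suc)
  finally show ?thesis unfolding F_def by simp
qed
end
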